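(* Each $L_{W}^{\pm}(a,\lambda)$ is an entire function of $\lambda$ and satisfies the differential equation \[ \frac{\partial^2 L_{W}^{\pm}(a,\lambda) }{\partial \lambda^2}=4\left(a-\lambda^2\right)L_{W}^{\pm}(a,\lambda) \pm 4W'(a,0)+4\lambda W(a,0). \]
   Context: $a$ is real; $W(a,\pm t)$ are the Weber parabolic cylinder functions (DLMF Sect. 12.14), solutions of $y''+(\tfrac14 t^2-a)y=0$. $L_{W}^{\pm}(a,\lambda)=\int_{0}^{\infty} e^{-\lambda t} W(a,\pm t)dt$ for $|\arg\lambda|\le\tfrac12\pi$, and by analytic continuation for other values of $\arg\lambda$. *)

theory Defs
  imports "HOL-Complex_Analysis.Complex_Analysis"
begin

text \<open>Initial values of Weber's parabolic cylinder function (DLMF 12.14.3).\<close>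
definition W0 :: "real \<Rightarrow> real" where
  "W0 a = 2 powr (-3/4) *
     sqrt (cmod (Gamma (1/4 + \<i> * of_real a / 2) / Gamma (3/4 + \<i> * of_real a / 2)))"

definition W1 :: "real \<Rightarrow> real" where
  "W1 a = - (2 powr (-1/4) *
     sqrt (cmod (Gamma (3/4 + \<i> * of_real a / 2) / Gamma (1/4 + \<i> * of_real a / 2))))"

definition weber_ode :: "real \<Rightarrow> (real \<Rightarrow> real) \<Rightarrow> bool" where
  "weber_ode a f \<longleftrightarrow> (\<exists>f'. \<forall>x. (f has_real_derivative f' x) (at x) \<and>
       (f' has_real_derivative ((a - x\<^sup>2 / 4) * f x)) (at x))"

definition W :: "real \<Rightarrow> real \<Rightarrow> real" where
  "W a = (THE f. weber_ode a f \<and> f 0 = W0 a \<and> deriv f 0 = W1 a)"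

end

theory Submission
  imports Defs "HOL-Real_Asymp.Real_Asymp"
begin


context
  fixes p0 p1 p2 q0 q1 y0 y1 :: complex
begin

fun cf :: "nat \<Rightarrow> complex" where
  "cf 0 = y0"
| "cf (Suc 0) = y1"
| "cf (Suc (Suc n)) = (p0 * cf n + p1 * (if n = 0 then 0 else cf (n - 1))
     + p2 * (if n < 2 then 0 else cf (n - 2))
     + (if n = 0 then q0 else if n = 1 then q1 else 0)) / of_nat ((n + 2) * (n + 1))"

lemma cf_bound:
  assumes s: "s > 0"
  shows "\<exists>M. \<forall>n. norm (cf n) * s ^ n \<le> M"
proof -
  define Q where "Q = norm p0 * s^2 + norm p1 * s^3 + norm p2 * s^4"
  define N where "N = nat \<lceil>Q\<rceil> + 2"
  define M where "M = Max ((\<lambda>k. norm (cf k) * s^k) ` {..N+1})"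
  have Mge: "norm (cf k) * s^k \<le> M" if "k \<le> N + 1" for k
    unfolding M_def by (rule Max_ge) (use that in auto)
  have M0: "0 \<le> M" using Mge[of 0] by (simp add: order_trans[OF norm_ge_zero])
  have "norm (cf n) * s ^ n \<le> M" for n
  proof (induction n rule: less_induct)
    case (less n)
    show ?case
    proof (cases "n \<le> N + 1")
      case True then show ?thesis by (rule Mge)
    next
      case False
      define m where "m = n - 2"
      have n: "n = Suc (Suc m)" and m: "m \<ge> N" using False by (auto simp: m_def)
      have m2: "\<not> m < 2" "m \<noteq> 0" "m \<noteq> 1" using m unfolding N_def by auto
      have IH0: "norm (cf m) * s^m \<le> M" using less n by auto
      have IH1: "norm (cf (m-1)) * s^(m-1) \<le> M" using less n by auto
      have IH2: "norm (cf (m-2)) * s^(m-2) \<le> M" using less n by auto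
      have QN: "Q \<le> real m" using m unfolding N_def by linarith
      have den: "real ((m + 2) * (m + 1)) \<ge> real m + 1" by simp
      have nn: "n = m + 2" "n = (m-1) + 3" "n = (m-2) + 4" using m2 n by auto
      have e1: "s^n = s^m * s^2" "s^n = s^(m-1) * s^3" "s^n = s^(m-2) * s^4"
        by (metis power_add nn(1), metis power_add nn(2), metis power_add nn(3))
      have "norm (cf n) * s^n = norm (p0 * cf m + p1 * cf (m-1) + p2 * cf (m-2)) * s^n / real ((m + 2) * (m + 1))"
      proof -
        have cfn: "cf n = (p0 * cf m + p1 * cf (m-1) + p2 * cf (m-2)) / of_nat ((m + 2) * (m + 1))"
          using m2 unfolding n by simp
        show ?thesis by (simp only: cfn norm_divide norm_of_nat times_divide_eq_left)
      qed
      also have "\<dots> \<le> (norm p0 * (norm (cf m) * s^m) * s^2 + norm p1 * (norm (cf (m-1)) * s^(m-1)) * s^3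
                      + norm p2 * (norm (cf (m-2)) * s^(m-2)) * s^4) / real ((m + 2) * (m + 1))"
      proof (rule divide_right_mono)
        have "norm (p0 * cf m + p1 * cf (m-1) + p2 * cf (m-2)) \<le> norm (p0 * cf m) + norm (p1 * cf (m-1)) + norm (p2 * cf (m-2))"
          by (rule order_trans[OF norm_triangle_ineq add_right_mono[OF norm_triangle_ineq]])
        then have "norm (p0 * cf m + p1 * cf (m-1) + p2 * cf (m-2)) * s^n \<le> (norm p0 * norm (cf m) + norm p1 * norm (cf (m-1)) + norm p2 * norm (cf (m-2))) * s^n"
          using s by (intro mult_right_mono) (auto simp: norm_mult)
        also have "\<dots> = norm p0 * norm (cf m) * s^n + norm p1 * norm (cf (m-1)) * s^n + norm p2 * norm (cf (m-2)) * s^n"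
          by (simp only: distrib_right)
        also have "norm p0 * norm (cf m) * s^n = norm p0 * (norm (cf m) * s^m) * s^2"
          unfolding e1(1) by (simp only: ac_simps)
        also have "norm p1 * norm (cf (m-1)) * s^n = norm p1 * (norm (cf (m-1)) * s^(m-1)) * s^3"
          unfolding e1(2) by (simp only: ac_simps)
        also have "norm p2 * norm (cf (m-2)) * s^n = norm p2 * (norm (cf (m-2)) * s^(m-2)) * s^4"
          unfolding e1(3) by (simp only: ac_simps)
        finally show "norm (p0 * cf m + p1 * cf (m-1) + p2 * cf (m-2)) * s^n \<le> norm p0 * (norm (cf m) * s^m) * s^2 + norm p1 * (norm (cf (m-1)) * s^(m-1)) * s^3
                      + norm p2 * (norm (cf (m-2)) * s^(m-2)) * s^4" .
      qed simp
      also have "\<dots> \<le> (norm p0 * M * s^2 + norm p1 * M * s^3 + norm p2 * M * s^4) / real ((m + 2) * (m + 1))"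
        using s IH0 IH1 IH2
        by (intro divide_right_mono add_mono mult_right_mono mult_left_mono) auto
      also have "\<dots> = Q * M / real ((m + 2) * (m + 1))" unfolding Q_def by (simp add: algebra_simps)
      also have "\<dots> \<le> M"
      proof -
        have "Q * M \<le> (real m + 1) * M" using QN M0 by (intro mult_right_mono) auto
        also have "\<dots> \<le> real ((m + 2) * (m + 1)) * M" using den M0 by (intro mult_right_mono) auto
        finally show ?thesis by (simp add: divide_le_eq mult.commute del: of_nat_mult)
      qed
      finally show ?thesis .
    qed
  qed
  then show ?thesis by blast
qed


lemma cf_summable: "summable (\<lambda>n. cf n * z^n)"
proof -
  obtain M where M: "\<And>n. norm (cf n) * (2*norm z+1)^n \<le> M"
    using cf_bound[of "2*norm z + 1"] by (auto simp: add_nonneg_pos)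
  show ?thesis
  proof (rule summable_comparison_test'[where g="\<lambda>n. M * (1/2)^n" and N=0])
    show "summable (\<lambda>n. M * (1/2::real)^n)" by (intro summable_mult summable_geometric) simp
    fix n :: nat
    have "norm (cf n * z^n) = norm (cf n) * norm z ^n" by (simp add: norm_mult norm_power)
    also have "\<dots> \<le> norm (cf n) * ((2*norm z+1) * (1/2))^n"
      by (intro mult_left_mono power_mono) auto
    also have "\<dots> = (norm (cf n) * (2*norm z+1)^n) * (1/2)^n"
      by (simp only: power_mult_distrib mult.assoc)
    also have "\<dots> \<le> M * (1/2)^n" using M[of n] by (intro mult_right_mono) auto
    finally show "norm (cf n * z^n) \<le> M * (1/2)^n" .
  qed
qed

lemma cf_rec: "diffs (diffs cf) n = p0 * cf n + p1 * (if n = 0 then 0 else cf (n - 1))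
     + p2 * (if n < 2 then 0 else cf (n - 2))
     + (if n = 0 then q0 else if n = 1 then q1 else 0)"
proof -
  have nz: "of_nat ((n + 2) * (n + 1)) \<noteq> (0::complex)" by (simp only: of_nat_eq_0_iff) simp
  have d: "diffs (diffs cf) n = of_nat ((n + 2) * (n + 1)) * cf (Suc (Suc n))"
    unfolding diffs_def by (simp del: cf.simps add: algebra_simps)
  show ?thesis unfolding d cf.simps(3) using nz
    by (simp only: times_divide_eq_right) (erule nonzero_mult_div_cancel_left)
qed

lemma shift_sums:
  fixes z :: complex
  assumes "(\<lambda>n. a n * z^n) sums S"
  shows "(\<lambda>n. (if n = 0 then 0 else a (n - 1)) * z^n) sums (z * S)"
proof -
  have "(\<lambda>n. z * (a n * z^n)) sums (z * S)" by (rule sums_mult[OF assms])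
  then have "(\<lambda>n. (\<lambda>n. (if n = 0 then 0 else a (n - 1)) * z^n) (Suc n)) sums (z * S)"
    by (simp add: ac_simps)
  then show ?thesis by (subst (asm) sums_Suc_iff) simp
qed

lemma ode_entire_0:
  "\<exists>f f1 f2. \<forall>z. (f has_field_derivative f1 z) (at z) \<and> (f1 has_field_derivative f2 z) (at z) \<and>
      f2 z = (p0 + p1 * z + p2 * z^2) * f z + q0 + q1 * z \<and> f 0 = y0 \<and> f1 0 = y1"
proof (intro exI allI conjI)
  define f where "f = (\<lambda>z. \<Sum>n. cf n * z^n)"
  have s1: "summable (\<lambda>n. diffs cf n * z^n)" for z
    by (rule termdiff_converges_all) (rule cf_summable)
  fix z :: complex
  show "((\<lambda>z. \<Sum>n. cf n * z^n) has_field_derivative (\<Sum>n. diffs cf n * z^n)) (at z)"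
    by (rule termdiffs_strong_converges_everywhere) (rule cf_summable)
  show "((\<lambda>z. \<Sum>n. diffs cf n * z^n) has_field_derivative (\<Sum>n. diffs (diffs cf) n * z^n)) (at z)"
    by (rule termdiffs_strong_converges_everywhere) (rule s1)
  show "(\<Sum>n. cf n * 0^n) = y0" "(\<Sum>n. diffs cf n * 0^n) = y1"
    using powser_zero[of cf] powser_zero[of "diffs cf"] by (auto simp: diffs_def)
  have S0: "(\<lambda>n. cf n * z^n) sums f z" unfolding f_def using cf_summable by (rule summable_sums)
  have S1: "(\<lambda>n. (if n = 0 then 0 else cf (n - 1)) * z^n) sums (z * f z)" by (rule shift_sums[OF S0])
  have S2': "(\<lambda>n. (if n = 0 then 0 else (\<lambda>n. (if n = 0 then 0 else cf (n - 1))) (n - 1)) * z^n) sums (z * (z * f z))"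
    by (rule shift_sums[OF S1])
  have e2: "(\<lambda>n. (if n = 0 then 0 else (\<lambda>n. (if n = 0 then 0 else cf (n - 1))) (n - 1)) * z^n) =
            (\<lambda>n. (if n < 2 then 0 else cf (n - 2)) * z^n)"
    by (rule ext) (auto simp: diff_diff_add numeral_2_eq_2)
  have S2: "(\<lambda>n. (if n < 2 then 0 else cf (n - 2)) * z^n) sums (z^2 * f z)"
    using S2' unfolding e2 by (simp add: power2_eq_square mult.assoc)
  have S3: "(\<lambda>n. (if n = 0 then q0 else if n = 1 then q1 else 0) * z^n) sums (q0 + q1 * z)"
  proof -
    have "(\<lambda>n. (if n = 0 then q0 else if n = 1 then q1 else 0) * z^n) sums
          (\<Sum>n\<in>{0,1}. (if n = 0 then q0 else if n = 1 then q1 else 0) * z^n)"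
      by (rule sums_finite) auto
    then show ?thesis by simp
  qed
  have S: "(\<lambda>n. p0 * (cf n * z^n) + p1 * ((if n = 0 then 0 else cf (n - 1)) * z^n)
      + p2 * ((if n < 2 then 0 else cf (n - 2)) * z^n) + (if n = 0 then q0 else if n = 1 then q1 else 0) * z^n)
      sums (p0 * f z + p1 * (z * f z) + p2 * (z^2 * f z) + (q0 + q1 * z))"
    by (intro sums_add sums_mult S0 S1 S2 S3)
  have eq: "(\<lambda>n. diffs (diffs cf) n * z^n) = (\<lambda>n. p0 * (cf n * z^n) + p1 * ((if n = 0 then 0 else cf (n - 1)) * z^n)
      + p2 * ((if n < 2 then 0 else cf (n - 2)) * z^n) + (if n = 0 then q0 else if n = 1 then q1 else 0) * z^n)"
    by (rule ext) (simp only: cf_rec distrib_right mult.assoc)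
  show "(\<Sum>n. diffs (diffs cf) n * z^n) = (p0 + p1 * z + p2 * z^2) * (\<Sum>n. cf n * z^n) + q0 + q1 * z"
    using sums_unique[OF S[folded eq]] unfolding f_def by (simp add: algebra_simps)
qed

end




lemma weber_exists:
  fixes a y0 y1 :: real
  shows "\<exists>f. weber_ode a f \<and> f 0 = y0 \<and> deriv f 0 = y1"
proof -
  obtain f f1 f2 :: "complex \<Rightarrow> complex" where H: "\<And>z. (f has_field_derivative f1 z) (at z) \<and> (f1 has_field_derivative f2 z) (at z) \<and>
      f2 z = (of_real a + 0 * z + (-1/4) * z^2) * f z + 0 + 0 * z \<and> f 0 = of_real y0 \<and> f1 0 = of_real y1"
    using ode_entire_0[of "of_real a" 0 "-1/4" 0 0 "of_real y0" "of_real y1"] by blast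
  define g where "g x = Re (f (of_real x))" for x
  define g' where "g' x = Re (f1 (of_real x))" for x
  have dg: "(g has_real_derivative g' x) (at x)" for x
    unfolding g_def[abs_def] g'_def
    by (rule has_field_derivative_Re, rule has_vector_derivative_real_field) (use H in blast)
  have dg': "(g' has_real_derivative ((a - x^2/4) * g x)) (at x)" for x
  proof -
    have "(g' has_real_derivative Re (f2 (of_real x))) (at x)"
      unfolding g'_def[abs_def]
      by (rule has_field_derivative_Re, rule has_vector_derivative_real_field) (use H in blast)
    moreover have "Re (f2 (of_real x)) = (a - x^2/4) * g x"
    proof -
      have "f2 (of_real x) = of_real (a - x^2/4) * f (of_real x)"
        using H[of "of_real x"] by (simp add: algebra_simps)
      then show ?thesis unfolding g_def by simp
    qed
    ultimately show ?thesis by simp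
  qed
  have "weber_ode a g" unfolding weber_ode_def using dg dg' by blast
  moreover have "g 0 = y0" using H[of 0] by (simp add: g_def)
  moreover have "deriv g 0 = y1" using DERIV_imp_deriv[OF dg[of 0]] H[of 0] by (simp add: g'_def)
  ultimately show ?thesis by blast
qed

lemma weber_unique:
  assumes f: "weber_ode a f" and g: "weber_ode a g" and i0: "f 0 = g 0" and i1: "deriv f 0 = deriv g 0"
  shows "f x = g x"
proof -
  obtain f' where f': "\<And>x. (f has_real_derivative f' x) (at x) \<and>
       (f' has_real_derivative ((a - x\<^sup>2 / 4) * f x)) (at x)" using f unfolding weber_ode_def by blast
  obtain g' where g': "\<And>x. (g has_real_derivative g' x) (at x) \<and>
       (g' has_real_derivative ((a - x\<^sup>2 / 4) * g x)) (at x)" using g unfolding weber_ode_def by blast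
  define d where "d t = f t - g t" for t
  define d' where "d' t = f' t - g' t" for t
  have dd: "(d has_real_derivative d' t) (at t)" for t
    unfolding d_def[abs_def] d'_def by (rule DERIV_diff) (use f' g' in auto)
  have dd': "(d' has_real_derivative ((a - t^2/4) * d t)) (at t)" for t
  proof -
    have "(d' has_real_derivative ((a - t^2/4) * f t - (a - t^2/4) * g t)) (at t)"
      unfolding d'_def[abs_def] using f'[of t] g'[of t] by (intro DERIV_diff) auto
    then show ?thesis by (simp add: d_def right_diff_distrib)
  qed
  have d0: "d 0 = 0" using i0 by (simp add: d_def)
  have d'0: "d' 0 = 0" using i1 DERIV_imp_deriv[of f "f' 0" 0] DERIV_imp_deriv[of g "g' 0" 0] f' g'
    by (simp add: d'_def)
  define E where "E t = d t * d t + d' t * d' t" for t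
  define E' where "E' t = (d' t * d t + d' t * d t) + ((a - t^2/4) * d t * d' t + (a - t^2/4) * d t * d' t)" for t
  have dE: "(E has_real_derivative E' t) (at t)" for t
    unfolding E_def[abs_def] E'_def by (rule DERIV_add; rule DERIV_mult; rule dd dd')
  define M where "M = 1 + \<bar>a\<bar> + x^2/4"
  have E0: "E 0 = 0" using d0 d'0 by (simp add: E_def)
  have Enn: "E t \<ge> 0" for t unfolding E_def by (intro add_nonneg_nonneg) auto
  have key: "\<bar>E' t\<bar> \<le> M * E t" if "\<bar>t\<bar> \<le> \<bar>x\<bar>" for t
  proof -
    have "E' t = (2 * d t * d' t) * (1 + a - t^2/4)" by (simp add: E'_def algebra_simps)
    then have "\<bar>E' t\<bar> = \<bar>2 * d t * d' t\<bar> * \<bar>1 + a - t^2/4\<bar>" by (simp add: abs_mult)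
    also have "\<dots> \<le> E t * M"
    proof (rule mult_mono)
      show "\<bar>2 * d t * d' t\<bar> \<le> E t" unfolding E_def
        using sum_squares_bound[of "\<bar>d t\<bar>" "\<bar>d' t\<bar>"] by (simp add: abs_mult power2_eq_square)
      have "t^2 \<le> x^2" using that by (simp add: abs_le_square_iff)
      moreover have "0 \<le> t^2" by simp
      ultimately show "\<bar>1 + a - t^2/4\<bar> \<le> M" unfolding M_def abs_le_iff
        using abs_ge_self[of a] abs_ge_minus_self[of a] by (intro conjI; linarith)
    qed (use Enn in auto)
    finally show ?thesis by (simp add: mult.commute)
  qed
  have "E x \<le> 0"
  proof (cases "x \<ge> 0")
    case True
    define G where "G t = E t * exp (- M * t)" for t
    have "G x \<le> G 0"
    proof (rule DERIV_nonpos_imp_nonincreasing[OF True])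
      fix t assume t: "0 \<le> t" "t \<le> x"
      have ex: "((\<lambda>t. exp (- M * t)) has_real_derivative exp (- M * t) * (- M)) (at t)"
        by (rule DERIV_fun_exp[OF DERIV_cmult_Id])
      have "(G has_real_derivative E' t * exp (- M * t) + (exp (- M * t) * (- M)) * E t) (at t)"
        unfolding G_def[abs_def] by (rule DERIV_mult[OF dE ex])
      moreover have "E' t * exp (- M * t) + (exp (- M * t) * (- M)) * E t = (E' t - M * E t) * exp (- M * t)"
        by (simp add: algebra_simps)
      moreover have "(E' t - M * E t) * exp (- M * t) \<le> 0"
        using key[of t] t by (intro mult_nonpos_nonneg) auto
      ultimately show "\<exists>y. DERIV G t :> y \<and> y \<le> 0" by metis
    qed
    then show ?thesis using E0 by (simp add: G_def mult_le_0_iff)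
  next
    case False
    define G where "G t = E t * exp (M * t)" for t
    have D: "\<exists>y. DERIV G t :> y \<and> y \<ge> 0" if t: "x \<le> t" "t \<le> 0" for t
    proof -
      have ex: "((\<lambda>t. exp (M * t)) has_real_derivative exp (M * t) * M) (at t)"
        by (rule DERIV_fun_exp[OF DERIV_cmult_Id])
      have "(G has_real_derivative E' t * exp (M * t) + (exp (M * t) * M) * E t) (at t)"
        unfolding G_def[abs_def] by (rule DERIV_mult[OF dE ex])
      moreover have "E' t * exp (M * t) + (exp (M * t) * M) * E t = (E' t + M * E t) * exp (M * t)"
        by (simp add: algebra_simps)
      moreover have "(E' t + M * E t) * exp (M * t) \<ge> 0"
        using key[of t] t False by (intro mult_nonneg_nonneg) auto
      ultimately show "\<exists>y. DERIV G t :> y \<and> y \<ge> 0" by metis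
    qed
    have "G x \<le> G 0" by (rule DERIV_nonneg_imp_nondecreasing[OF _ D]) (use False in simp_all)
    then show ?thesis using E0 by (simp add: G_def mult_le_0_iff)
  qed
  then have "d x * d x + d' x * d' x \<le> 0" unfolding E_def .
  then have "d x = 0" by (simp only: sum_squares_le_zero_iff)
  then show ?thesis by (simp add: d_def)
qed

lemma W_props: "weber_ode a (W a) \<and> W a 0 = W0 a \<and> deriv (W a) 0 = W1 a"
proof -
  obtain f where f: "weber_ode a f \<and> f 0 = W0 a \<and> deriv f 0 = W1 a" using weber_exists by blast
  have "\<exists>!f. weber_ode a f \<and> f 0 = W0 a \<and> deriv f 0 = W1 a"
  proof (rule ex1I[where a=f])
    show "weber_ode a f \<and> f 0 = W0 a \<and> deriv f 0 = W1 a" by (rule f)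
    fix g assume "weber_ode a g \<and> g 0 = W0 a \<and> deriv g 0 = W1 a"
    then have g: "weber_ode a g" "g 0 = f 0" "deriv g 0 = deriv f 0" using f by auto
    show "g = f"
    proof
      fix x show "g x = f x" using weber_unique[OF g(1) _ g(2) g(3)] f by blast
    qed
  qed
  then show ?thesis unfolding W_def by (rule theI')
qed




lemma weber_growth:
  fixes u u' :: "real \<Rightarrow> real" and a :: real
  assumes du: "\<And>t. (u has_real_derivative u' t) (at t)"
    and du': "\<And>t. (u' has_real_derivative (a - t^2/4) * u t) (at t)"
  shows "\<exists>C. \<forall>t\<ge>0. \<bar>u t\<bar> \<le> C \<and> \<bar>u' t\<bar> \<le> C * (1 + t)"
proof -
  define T where "T = 2 * sqrt (\<bar>a\<bar> + 1)"
  have T0: "T \<ge> 0" unfolding T_def by simp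
  have TT: "T^2 = 4 * \<bar>a\<bar> + 4" unfolding T_def by (simp add: power_mult_distrib)
  have big: "t^2 - 4 * a \<ge> 4" if "t \<ge> T" for t
  proof -
    have "T^2 \<le> t^2" using that T0 by (intro power_mono) auto
    then show ?thesis using TT abs_ge_self[of a] by linarith
  qed
  define N where "N t = u' t * u' t + (t * t / 4 - a) * (u t * u t)" for t
  define D where "D t = t * t - 4 * a" for t
  define R where "R t = N t / D t" for t
  have DD: "D t = t^2 - 4 * a" for t by (simp add: D_def power2_eq_square)
  have Npos: "N t \<ge> 0" if "t \<ge> T" for t
  proof -
    have h: "t * t / 4 - a \<ge> 0" using big[OF that] by (simp add: power2_eq_square)
    show ?thesis unfolding N_def by (rule add_nonneg_nonneg[OF zero_le_square mult_nonneg_nonneg[OF h zero_le_square]])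
  qed
  have Rdec: "R t \<le> R T" if t: "t \<ge> T" for t
  proof (rule DERIV_nonpos_imp_nonincreasing[OF t])
    fix s assume s: "T \<le> s" "s \<le> t"
    have dpoly: "((\<lambda>t. t * t / 4 - a) has_real_derivative s / 2) (at s)"
      by (auto intro!: derivative_eq_intros simp: field_simps)
    have dN: "(N has_real_derivative
        ((a - s^2/4) * u s * u' s + (a - s^2/4) * u s * u' s) +
        (s / 2 * (u s * u s) + (u' s * u s + u' s * u s) * (s * s / 4 - a))) (at s)"
      unfolding N_def[abs_def]
      by (rule DERIV_add; (rule DERIV_mult)?; (rule DERIV_mult)?; (rule du du' dpoly))
    have dD: "(D has_real_derivative 2 * s) (at s)"
      unfolding D_def[abs_def] by (auto intro!: derivative_eq_intros)
    have Dnz: "D s \<noteq> 0" using big[OF s(1)] DD[of s] by linarith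
    have Dpos: "D s > 0" using big[OF s(1)] DD[of s] by linarith
    define N' where "N' = ((a - s^2/4) * u s * u' s + (a - s^2/4) * u s * u' s) +
        (s / 2 * (u s * u s) + (u' s * u s + u' s * u s) * (s * s / 4 - a))"
    have "(R has_real_derivative (N' * D s - N s * (2 * s)) / (D s * D s)) (at s)"
      unfolding R_def[abs_def] N'_def by (rule DERIV_divide[OF dN dD Dnz])
    moreover have "N' * D s - N s * (2 * s) = - 2 * s * (u' s * u' s)"
      unfolding N'_def N_def D_def by (simp add: field_simps power2_eq_square)
    moreover have "- 2 * s * (u' s * u' s) \<le> 0" using s T0 by (simp add: mult_nonneg_nonneg)
    ultimately show "\<exists>y. DERIV R s :> y \<and> y \<le> 0"
      using Dpos by (metis divide_nonpos_pos mult_pos_pos)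
  qed
  define K where "K = R T"
  have K0: "K \<ge> 0" unfolding K_def R_def using Npos[of T] big[of T] DD[of T] by simp
  have NK: "N t \<le> K * (t^2 - 4 * a)" if "t \<ge> T" for t
  proof -
    have "N t / D t \<le> K" using Rdec[OF that] by (simp add: R_def K_def)
    moreover have "D t > 0" using big[OF that] DD[of t] by linarith
    ultimately show ?thesis by (simp add: divide_le_eq DD)
  qed
  have far1: "\<bar>u t\<bar> \<le> 2 * sqrt K" if "t \<ge> T" for t
  proof -
    have "(t^2 - 4*a) / 4 * (u t)^2 \<le> N t" unfolding N_def
      by (simp add: power2_eq_square field_simps)
    then have "(t^2 - 4*a) * (u t)^2 \<le> (t^2 - 4*a) * (4 * K)" using NK[OF that] by (simp add: algebra_simps)
    then have "(u t)^2 \<le> 4 * K" using big[OF that] by (simp add: mult_le_cancel_left)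
    then have "sqrt ((u t)^2) \<le> sqrt (4 * K)" by (rule real_sqrt_le_mono)
    then show ?thesis by (simp add: real_sqrt_mult)
  qed
  have far2: "\<bar>u' t\<bar> \<le> sqrt (K * (1 + 4 * \<bar>a\<bar>)) * (1 + t)" if "t \<ge> T" for t
  proof -
    have h: "t * t / 4 - a \<ge> 0" using big[OF that] by (simp add: power2_eq_square)
    have "(t * t / 4 - a) * (u t * u t) \<ge> 0" by (rule mult_nonneg_nonneg[OF h zero_le_square])
    then have "(u' t)^2 \<le> N t" unfolding N_def by (simp add: power2_eq_square)
    also have "\<dots> \<le> K * (t^2 - 4 * a)" by (rule NK[OF that])
    also have "\<dots> \<le> K * ((1 + 4 * \<bar>a\<bar>) * (1 + t)^2)"
    proof (rule mult_left_mono[OF _ K0])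
      have "t \<ge> 0" using that T0 by simp
      then have "0 \<le> 4 * \<bar>a\<bar> * (2 * t + t^2) + 2 * t + 1"
        by (intro add_nonneg_nonneg mult_nonneg_nonneg) auto
      then show "t^2 - 4 * a \<le> (1 + 4 * \<bar>a\<bar>) * (1 + t)^2"
        using abs_ge_self[of a] by (simp add: power2_eq_square algebra_simps)
    qed
    finally have "sqrt ((u' t)^2) \<le> sqrt (K * (1 + 4 * \<bar>a\<bar>) * (1 + t)^2)"
      by (intro real_sqrt_le_mono) (simp add: mult.assoc)
    also have "\<dots> = sqrt (K * (1 + 4 * \<bar>a\<bar>)) * (1 + t)"
      using that T0 by (simp add: real_sqrt_mult)
    finally show ?thesis by simp
  qed
  have cu: "isCont u t" for t using du DERIV_isCont by blast
  have cu': "isCont u' t" for t using du' DERIV_isCont by blast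
  obtain B1 where B1: "\<And>t. 0 \<le> t \<and> t \<le> T \<longrightarrow> \<bar>u t\<bar> \<le> B1"
    using isCont_bounded[of 0 T "\<lambda>t. \<bar>u t\<bar>"] T0 cu by (auto intro: continuous_intros)
  obtain B2 where B2: "\<And>t. 0 \<le> t \<and> t \<le> T \<longrightarrow> \<bar>u' t\<bar> \<le> B2"
    using isCont_bounded[of 0 T "\<lambda>t. \<bar>u' t\<bar>"] T0 cu' by (auto intro: continuous_intros)
  define C where "C = max (max B1 B2) (max (2 * sqrt K) (sqrt (K * (1 + 4 * \<bar>a\<bar>))))"
  have "\<bar>u t\<bar> \<le> C \<and> \<bar>u' t\<bar> \<le> C * (1 + t)" if t: "t \<ge> 0" for t
  proof (cases "t \<le> T")
    case True
    have "\<bar>u' t\<bar> \<le> B2" using B2 t True by blast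
    also have "B2 \<le> C" unfolding C_def by simp
    also have "C \<le> C * (1 + t)" using t \<open>B2 \<le> C\<close> \<open>\<bar>u' t\<bar> \<le> B2\<close>
      by (simp add: algebra_simps)
    finally have 2: "\<bar>u' t\<bar> \<le> C * (1 + t)" .
    have "\<bar>u t\<bar> \<le> B1" using B1 t True by blast
    moreover have "B1 \<le> C" unfolding C_def by simp
    ultimately show ?thesis using 2 by linarith
  next
    case False
    have C0: "C \<ge> 0" unfolding C_def using K0 by (simp add: le_max_iff_disj)
    have "\<bar>u' t\<bar> \<le> sqrt (K * (1 + 4 * \<bar>a\<bar>)) * (1 + t)" using far2 False by simp
    also have "\<dots> \<le> C * (1 + t)" unfolding C_def using t by (intro mult_right_mono) auto
    finally have 2: "\<bar>u' t\<bar> \<le> C * (1 + t)" .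
    have "\<bar>u t\<bar> \<le> 2 * sqrt K" using far1[of t] False by simp
    moreover have "2 * sqrt K \<le> C" unfolding C_def by simp
    ultimately show ?thesis using 2 by linarith
  qed
  then show ?thesis by blast
qed




lemma tpow:
  fixes t \<sigma> :: real
  assumes t: "t \<ge> 0" and s: "\<sigma> > 0" and k: "k \<le> 2"
  shows "t^k \<le> (1 + 4/\<sigma>)^2 * exp (\<sigma>/2 * t)"
proof -
  have A1: "1 \<le> (1 + 4/\<sigma>)^2" using s by (simp add: one_le_power)
  have A2: "4/\<sigma> \<le> (1 + 4/\<sigma>)^2"
  proof -
    have "4/\<sigma> \<le> 1 + 4/\<sigma>" by simp
    also have "\<dots> \<le> (1 + 4/\<sigma>)^2"
    proof -
      have h: "1 \<le> 1 + 4/\<sigma>" using s by simp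
      have "(1 + 4/\<sigma>) * 1 \<le> (1 + 4/\<sigma>) * (1 + 4/\<sigma>)" by (rule mult_left_mono[OF h]) (use h in linarith)
      then show ?thesis by (simp add: power2_eq_square)
    qed
    finally show ?thesis .
  qed
  have E1: "1 \<le> exp (\<sigma>/2 * t)" using s t by simp
  have x: "\<sigma>/4 * t \<le> exp (\<sigma>/4 * t)" using exp_ge_add_one_self[of "\<sigma>/4 * t"] by linarith
  have t1: "t \<le> 4/\<sigma> * exp (\<sigma>/4 * t)"
  proof -
    have "t = 4/\<sigma> * (\<sigma>/4 * t)" using s by simp
    also have "\<dots> \<le> 4/\<sigma> * exp (\<sigma>/4 * t)" using x s by (intro mult_left_mono) auto
    finally show ?thesis .
  qed
  have e4: "exp (\<sigma>/4 * t) \<le> exp (\<sigma>/2 * t)" using s t by simp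
  consider "k = 0" | "k = 1" | "k = 2" using k by linarith
  then show ?thesis
  proof cases
    case 1
    have "1 * 1 \<le> (1 + 4/\<sigma>)^2 * exp (\<sigma>/2 * t)" by (rule mult_mono[OF A1 E1]) auto
    then show ?thesis using 1 by simp
  next
    case 2
    have "t \<le> 4/\<sigma> * exp (\<sigma>/2 * t)" using t1 e4 s by (meson order_trans mult_left_mono less_imp_le divide_nonneg_pos zero_le_numeral)
    also have "\<dots> \<le> (1 + 4/\<sigma>)^2 * exp (\<sigma>/2 * t)" using A2 by (intro mult_right_mono) auto
    finally show ?thesis using 2 by simp
  next
    case 3
    have "t^2 \<le> (4/\<sigma> * exp (\<sigma>/4 * t))^2" using t1 t by (intro power_mono) auto
    also have "\<dots> = (4/\<sigma>)^2 * exp (\<sigma>/2 * t)"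
      by (simp add: power_mult_distrib power2_eq_square exp_add[symmetric])
    also have "\<dots> \<le> (1 + 4/\<sigma>)^2 * exp (\<sigma>/2 * t)"
      using s by (intro mult_right_mono power_mono) auto
    finally show ?thesis using 3 by simp
  qed
qed

lemma tail:
  fixes g :: "real \<Rightarrow> complex"
  assumes cg: "continuous_on {0..} g" and mu: "\<mu> > 0"
    and bd: "\<And>t. t \<ge> 0 \<Longrightarrow> norm (g t) \<le> M * exp (- \<mu> * t)"
  shows "g integrable_on {0..}"
    and "\<And>b. b \<ge> 0 \<Longrightarrow> norm (integral {0..} g - integral {0..b} g) \<le> M * exp (- \<mu> * b) / \<mu>"
proof -
  have ge: "((\<lambda>t. M * exp (- \<mu> * t)) has_integral M * (exp (- \<mu> * c) / \<mu>)) {c..}" for c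
    by (rule has_integral_mult_right[OF has_integral_exp_minus_to_infinity[OF mu]])
  have int: "g integrable_on {c..}" if c: "c \<ge> 0" for c
  proof (rule measurable_bounded_by_integrable_imp_integrable)
    show "g \<in> borel_measurable (lebesgue_on {c..})"
      by (rule continuous_imp_measurable_on_sets_lebesgue) (use cg c in \<open>auto intro: continuous_on_subset\<close>)
    show "(\<lambda>t. M * exp (- \<mu> * t)) integrable_on {c..}" using ge by blast
    show "\<And>x. x \<in> {c..} \<Longrightarrow> norm (g x) \<le> M * exp (- \<mu> * x)" using bd c by auto
  qed simp
  show "g integrable_on {0..}" using int[of 0] by simp
  fix b :: real assume b: "b \<ge> 0"
  have gb: "g integrable_on {0..b}"
    by (rule integrable_continuous_real) (use cg in \<open>auto intro: continuous_on_subset\<close>)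
  have "integral ({0..b} \<union> {b..}) g = integral {0..b} g + integral {b..} g"
    by (rule integral_Un[OF gb int[OF b]]) (auto intro: negligible_subset[OF negligible_sing[of b]])
  moreover have "{0..b} \<union> {b..} = {0..}" using b by auto
  ultimately have "integral {0..} g - integral {0..b} g = integral {b..} g" by simp
  moreover have "norm (integral {b..} g) \<le> integral {b..} (\<lambda>t. M * exp (- \<mu> * t))"
    by (rule integral_norm_bound_integral[OF int[OF b]]) (use ge bd b in auto)
  moreover have "integral {b..} (\<lambda>t. M * exp (- \<mu> * t)) = M * (exp (- \<mu> * b) / \<mu>)"
    by (rule integral_unique[OF ge])
  ultimately show "norm (integral {0..} g - integral {0..b} g) \<le> M * exp (- \<mu> * b) / \<mu>" by simp
qed

definition hk :: "(real \<Rightarrow> real) \<Rightarrow> nat \<Rightarrow> complex \<Rightarrow> real \<Rightarrow> complex" where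
  "hk w k z t = (- of_real t)^k * (exp (- z * of_real t) * of_real (w t))"

context
  fixes a C :: real and w w' :: "real \<Rightarrow> real"
  assumes dw: "\<And>t. (w has_real_derivative w' t) (at t)"
    and dw': "\<And>t. (w' has_real_derivative (a - t^2/4) * w t) (at t)"
    and Cb: "\<And>t. t \<ge> 0 \<Longrightarrow> \<bar>w t\<bar> \<le> C \<and> \<bar>w' t\<bar> \<le> C * (1 + t)"
begin

lemma cw: "continuous_on S w"
  by (rule continuous_at_imp_continuous_on) (use dw DERIV_isCont in blast)

lemma C0: "C \<ge> 0"
proof -
  have "\<bar>w 0\<bar> \<le> C" using Cb[of 0] by simp
  then show ?thesis by (meson abs_ge_zero order_trans)
qed

lemma hk_cont2: "continuous_on S (\<lambda>p. hk w k (fst p) (snd p))"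
proof -
  have "continuous_on S (\<lambda>p. w (snd p))"
    by (rule continuous_on_compose2[OF cw[of UNIV]]) (auto intro: continuous_intros)
  then show ?thesis unfolding hk_def by (intro continuous_intros) auto
qed

lemma hk_cont: "continuous_on S (hk w k z)"
proof -
  have "continuous_on S (\<lambda>t. hk w k (fst (z, t)) (snd (z, t)))"
    by (rule continuous_on_compose2[OF hk_cont2[of UNIV k]]) (auto intro: continuous_intros)
  then show ?thesis by simp
qed

lemma hk_deriv: "((\<lambda>z. hk w k z t) has_field_derivative hk w (Suc k) z t) (at z within U)"
  unfolding hk_def by (auto intro!: derivative_eq_intros simp: algebra_simps)

lemma Fn_deriv: "((\<lambda>z. integral {0..b} (hk w k z)) has_field_derivative integral {0..b} (hk w (Suc k) z)) (at z)"
proof -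
  have "((\<lambda>z. integral (cbox 0 b) (hk w k z)) has_field_derivative integral (cbox 0 b) (hk w (Suc k) z)) (at z within UNIV)"
  proof (rule leibniz_rule_field_derivative)
    show "\<And>x. x \<in> UNIV \<Longrightarrow> hk w k x integrable_on cbox 0 b"
      by (rule integrable_continuous) (rule hk_cont)
    show "continuous_on (UNIV \<times> cbox 0 b) (\<lambda>(x, t). hk w (Suc k) x t)"
      using hk_cont2[of "UNIV \<times> cbox 0 b" "Suc k"] by (simp add: case_prod_beta)
  qed (auto intro: hk_deriv)
  then show ?thesis by simp
qed

lemma hk_bound:
  assumes s: "\<sigma> > 0" and z: "Re z \<ge> \<sigma>" and t: "t \<ge> 0" and k: "k \<le> 2"
  shows "norm (hk w k z t) \<le> C * (1 + 4/\<sigma>)^2 * exp (- (\<sigma>/2) * t)"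
proof -
  have "norm (hk w k z t) = t^k * exp (- Re z * t) * \<bar>w t\<bar>"
    unfolding hk_def using t by (simp add: norm_mult norm_power norm_exp_eq_Re)
  also have "\<dots> \<le> ((1 + 4/\<sigma>)^2 * exp (\<sigma>/2 * t)) * exp (- \<sigma> * t) * C"
  proof (intro mult_mono)
    show "t^k \<le> (1 + 4/\<sigma>)^2 * exp (\<sigma>/2 * t)" by (rule tpow[OF t s k])
    show "exp (- Re z * t) \<le> exp (- \<sigma> * t)" using z t by (simp add: mult_right_mono)
    show "\<bar>w t\<bar> \<le> C" using Cb[OF t] by simp
  qed (use t in auto)
  also have "\<dots> = C * (1 + 4/\<sigma>)^2 * (exp (\<sigma>/2 * t) * exp (- \<sigma> * t))" by (simp add: ac_simps)
  also have "exp (\<sigma>/2 * t) * exp (- \<sigma> * t) = exp (- (\<sigma>/2) * t)" by (simp add: exp_add[symmetric] algebra_simps)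
  finally show ?thesis .
qed

lemma hk_tail:
  assumes s: "\<sigma> > 0" and z: "Re z \<ge> \<sigma>" and k: "k \<le> 2"
  shows "hk w k z integrable_on {0..}"
    and "\<And>b. b \<ge> 0 \<Longrightarrow> norm (integral {0..b} (hk w k z) - integral {0..} (hk w k z))
            \<le> C * (1 + 4/\<sigma>)^2 * exp (- (\<sigma>/2) * b) / (\<sigma>/2)"
proof -
  note T = tail[of "hk w k z" "\<sigma>/2" "C * (1 + 4/\<sigma>)^2", OF hk_cont _ hk_bound[OF s z _ k]]
  show "hk w k z integrable_on {0..}" using T(1) s by simp
  fix b :: real assume "b \<ge> 0"
  then show "norm (integral {0..b} (hk w k z) - integral {0..} (hk w k z))
            \<le> C * (1 + 4/\<sigma>)^2 * exp (- (\<sigma>/2) * b) / (\<sigma>/2)"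
    using T(2) s by (simp add: norm_minus_commute)
qed

lemma gdecay: "\<mu> > 0 \<Longrightarrow> (\<lambda>n. B * exp (- \<mu> * real n) / \<mu>) \<longlonglongrightarrow> 0"
proof -
  assume "\<mu> > 0"
  then have "(\<lambda>n. exp (- \<mu> * real n)) \<longlonglongrightarrow> 0" by real_asymp
  then show ?thesis by (intro tendsto_divide_zero tendsto_mult_right_zero)
qed

lemma hk_lim:
  assumes z: "Re z > 0" and k: "k \<le> 2"
  shows "(\<lambda>n. integral {0..real n} (hk w k z)) \<longlonglongrightarrow> integral {0..} (hk w k z)"
proof -
  have "(\<lambda>n. integral {0..real n} (hk w k z) - integral {0..} (hk w k z)) \<longlonglongrightarrow> 0"
  proof (rule Lim_null_comparison)
    show "\<forall>\<^sub>F n in sequentially. norm (integral {0..real n} (hk w k z) - integral {0..} (hk w k z))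
          \<le> C * (1 + 4/Re z)^2 * exp (- (Re z/2) * real n) / (Re z/2)"
      using hk_tail(2)[OF z order_refl k] by simp
    show "(\<lambda>n. C * (1 + 4/Re z)^2 * exp (- (Re z/2) * real n) / (Re z/2)) \<longlonglongrightarrow> 0"
      by (rule gdecay) (use z in simp)
  qed
  then show ?thesis by (simp add: LIM_zero_iff)
qed

lemma hk_unif:
  assumes z0: "Re z0 > 0" and k: "k \<le> 2"
  shows "uniform_limit (cball z0 (Re z0/2)) (\<lambda>n z. integral {0..real n} (hk w k z))
           (\<lambda>z. integral {0..} (hk w k z)) sequentially"
  unfolding uniform_limit_iff
proof (intro allI impI)
  fix e :: real assume e: "e > 0"
  define \<sigma> where "\<sigma> = Re z0 / 2"
  have s: "\<sigma> > 0" using z0 by (simp add: \<sigma>_def)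
  have "(\<lambda>n. C * (1 + 4/\<sigma>)^2 * exp (- (\<sigma>/2) * real n) / (\<sigma>/2)) \<longlonglongrightarrow> 0"
    by (rule gdecay) (use s in simp)
  then have ev: "\<forall>\<^sub>F n in sequentially. C * (1 + 4/\<sigma>)^2 * exp (- (\<sigma>/2) * real n) / (\<sigma>/2) < e"
    using e by (rule order_tendstoD(2))
  show "\<forall>\<^sub>F n in sequentially. \<forall>x\<in>cball z0 (Re z0/2).
          dist (integral {0..real n} (hk w k x)) (integral {0..} (hk w k x)) < e"
  proof (rule eventually_mono[OF ev], intro ballI)
    fix n x assume n: "C * (1 + 4/\<sigma>)^2 * exp (- (\<sigma>/2) * real n) / (\<sigma>/2) < e"
      and x: "x \<in> cball z0 (Re z0/2)"
    have "\<bar>Re z0 - Re x\<bar> \<le> Re z0 / 2"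
      using x abs_Re_le_cmod[of "z0 - x"] by (simp add: dist_norm)
    then have "Re x \<ge> \<sigma>" unfolding \<sigma>_def by linarith
    then have "norm (integral {0..real n} (hk w k x) - integral {0..} (hk w k x))
          \<le> C * (1 + 4/\<sigma>)^2 * exp (- (\<sigma>/2) * real n) / (\<sigma>/2)"
      using hk_tail(2)[OF s _ k] by simp
    then show "dist (integral {0..real n} (hk w k x)) (integral {0..} (hk w k x)) < e"
      using n by (simp add: dist_norm)
  qed
qed

lemma Fk_deriv:
  assumes z0: "Re z0 > 0" and k: "k \<le> 1"
  shows "((\<lambda>z. integral {0..} (hk w k z)) has_field_derivative integral {0..} (hk w (Suc k) z0)) (at z0)"
proof -
  define r where "r = Re z0 / 2"
  have r: "r > 0" using z0 by (simp add: r_def)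
  obtain g' where g': "\<And>x. x \<in> ball z0 r \<Longrightarrow>
      ((\<lambda>z. integral {0..} (hk w k z)) has_field_derivative g' x) (at x) \<and>
      ((\<lambda>n. integral {0..real n} (hk w (Suc k) x)) \<longlongrightarrow> g' x) sequentially"
  proof (rule has_complex_derivative_uniform_limit[where f="\<lambda>n z. integral {0..real n} (hk w k z)" and z=z0 and r=r
        and f'="\<lambda>n x. integral {0..real n} (hk w (Suc k) x)" and F=sequentially and g="\<lambda>z. integral {0..} (hk w k z)"])
    show "\<forall>\<^sub>F n in sequentially. continuous_on (cball z0 r) (\<lambda>z. integral {0..real n} (hk w k z)) \<and>
        (\<forall>x\<in>ball z0 r. ((\<lambda>z. integral {0..real n} (hk w k z)) has_field_derivative integral {0..real n} (hk w (Suc k) x)) (at x))"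
    proof (intro always_eventually allI conjI ballI)
      fix n :: nat
      show "continuous_on (cball z0 r) (\<lambda>z. integral {0..real n} (hk w k z))"
        by (rule continuous_at_imp_continuous_on) (use Fn_deriv DERIV_isCont in blast)
      fix x show "((\<lambda>z. integral {0..real n} (hk w k z)) has_field_derivative integral {0..real n} (hk w (Suc k) x)) (at x)"
        by (rule Fn_deriv)
    qed
    show "uniform_limit (cball z0 r) (\<lambda>n z. integral {0..real n} (hk w k z)) (\<lambda>z. integral {0..} (hk w k z)) sequentially"
      unfolding r_def by (rule hk_unif[OF z0]) (use k in simp)
  qed (use r in auto)
  have "z0 \<in> ball z0 r" using r by simp
  note G = g'[OF this]
  have "(\<lambda>n. integral {0..real n} (hk w (Suc k) z0)) \<longlonglongrightarrow> integral {0..} (hk w (Suc k) z0)"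
    by (rule hk_lim[OF z0]) (use k in simp)
  then have "g' z0 = integral {0..} (hk w (Suc k) z0)" using G by (metis LIMSEQ_unique)
  then show ?thesis using G by simp
qed


lemma Fk_ode:
  assumes z: "Re z > 0"
  shows "integral {0..} (hk w 2 z) = 4 * (of_real a - z^2) * integral {0..} (hk w 0 z)
           + 4 * (of_real (w' 0) + z * of_real (w 0))"
proof -
  define \<phi> where "\<phi> t = exp (- z * of_real t) * (of_real (w' t) + z * of_real (w t))" for t :: real
  have d\<phi>: "(\<phi> has_vector_derivative ((of_real a - z^2) * hk w 0 z t - hk w 2 z t / 4)) (at t)" for t
  proof -
    have e0: "((\<lambda>\<zeta>. exp (- z * \<zeta>)) has_field_derivative exp (- z * of_real t) * (- z)) (at (of_real t))"
      by (auto intro!: derivative_eq_intros)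
    have e: "((\<lambda>t. exp (- z * of_real t)) has_vector_derivative exp (- z * of_real t) * (- z)) (at t)"
      using has_vector_derivative_real_field[OF e0, of UNIV] by simp
    have g: "((\<lambda>t. of_real (w' t) + z * of_real (w t)) has_vector_derivative
              (of_real ((a - t^2/4) * w t) + z * of_real (w' t))) (at t)"
      by (intro has_vector_derivative_add has_vector_derivative_of_real has_vector_derivative_mult_right dw dw')
    have "(\<phi> has_vector_derivative (exp (- z * of_real t) * (of_real ((a - t^2/4) * w t) + z * of_real (w' t))
            + exp (- z * of_real t) * (- z) * (of_real (w' t) + z * of_real (w t)))) (at t)"
      unfolding \<phi>_def[abs_def] by (rule has_vector_derivative_mult[OF e g])
    moreover have "exp (- z * of_real t) * (of_real ((a - t^2/4) * w t) + z * of_real (w' t))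
            + exp (- z * of_real t) * (- z) * (of_real (w' t) + z * of_real (w t))
          = (of_real a - z^2) * hk w 0 z t - hk w 2 z t / 4"
      unfolding hk_def by (simp add: field_simps power2_eq_square)
    ultimately show ?thesis by simp
  qed
  have I: "(hk w k z has_integral integral {0..b} (hk w k z)) {0..b}" for k b
    by (rule integrable_integral[OF integrable_continuous_real[OF hk_cont]])
  have lin: "(of_real a - z^2) * integral {0..b} (hk w 0 z) - integral {0..b} (hk w 2 z) / 4 = \<phi> b - \<phi> 0"
    if b: "b \<ge> 0" for b
  proof -
    have FTC: "((\<lambda>t. (of_real a - z^2) * hk w 0 z t - hk w 2 z t / 4) has_integral \<phi> b - \<phi> 0) {0..b}"
      by (rule fundamental_theorem_of_calculus[OF b]) (use d\<phi> in \<open>auto intro: has_vector_derivative_at_within\<close>)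
    have "((\<lambda>t. (of_real a - z^2) * hk w 0 z t - hk w 2 z t / 4) has_integral
          (of_real a - z^2) * integral {0..b} (hk w 0 z) - integral {0..b} (hk w 2 z) / 4) {0..b}"
      by (intro has_integral_diff has_integral_mult_right has_integral_divide I)
    then show ?thesis using FTC by (rule has_integral_unique)
  qed
  have L1: "(\<lambda>n. (of_real a - z^2) * integral {0..real n} (hk w 0 z) - integral {0..real n} (hk w 2 z) / 4)
      \<longlonglongrightarrow> (of_real a - z^2) * integral {0..} (hk w 0 z) - integral {0..} (hk w 2 z) / 4"
    by (intro tendsto_intros hk_lim z) simp_all
  define \<sigma> where "\<sigma> = Re z"
  have s: "\<sigma> > 0" using z by (simp add: \<sigma>_def)
  have \<phi>lim: "(\<lambda>n. \<phi> (real n)) \<longlonglongrightarrow> 0"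
  proof (rule Lim_null_comparison)
    show "\<forall>\<^sub>F n in sequentially. norm (\<phi> (real n)) \<le> C * (exp (- \<sigma> * real n) * (1 + real n)) + (norm z * C) * exp (- \<sigma> * real n)"
    proof (intro always_eventually allI)
      fix n :: nat
      have "norm (\<phi> (real n)) = exp (- \<sigma> * real n) * norm (of_real (w' n) + z * of_real (w n))"
        by (simp add: \<phi>_def norm_mult norm_exp_eq_Re \<sigma>_def)
      also have "\<dots> \<le> exp (- \<sigma> * real n) * (C * (1 + real n) + norm z * C)"
      proof (rule mult_left_mono)
        have "norm (of_real (w' n) + z * of_real (w n)) \<le> \<bar>w' n\<bar> + norm z * \<bar>w n\<bar>"
          by (rule order_trans[OF norm_triangle_ineq]) (simp add: norm_mult)
        also have "\<dots> \<le> C * (1 + real n) + norm z * C"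
          using Cb[of "real n"] by (intro add_mono mult_left_mono) auto
        finally show "norm (of_real (w' n) + z * of_real (w n)) \<le> C * (1 + real n) + norm z * C" .
      qed simp
      also have "\<dots> = C * (exp (- \<sigma> * real n) * (1 + real n)) + (norm z * C) * exp (- \<sigma> * real n)"
        by (simp add: algebra_simps)
      finally show "norm (\<phi> (real n)) \<le> C * (exp (- \<sigma> * real n) * (1 + real n)) + (norm z * C) * exp (- \<sigma> * real n)" .
    qed
    have a1: "(\<lambda>n. exp (- \<sigma> * real n) * (1 + real n)) \<longlonglongrightarrow> 0" using s by real_asymp
    have a2: "(\<lambda>n. exp (- \<sigma> * real n)) \<longlonglongrightarrow> 0" using s by real_asymp
    show "(\<lambda>n. C * (exp (- \<sigma> * real n) * (1 + real n)) + (norm z * C) * exp (- \<sigma> * real n)) \<longlonglongrightarrow> 0"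
      by (intro tendsto_add_zero tendsto_mult_right_zero a1 a2)
  qed
  have L2: "(\<lambda>n. \<phi> (real n) - \<phi> 0) \<longlonglongrightarrow> 0 - \<phi> 0"
    by (intro tendsto_diff \<phi>lim tendsto_const)
  have L3: "(\<lambda>n. (of_real a - z^2) * integral {0..real n} (hk w 0 z) - integral {0..real n} (hk w 2 z) / 4)
      \<longlonglongrightarrow> 0 - \<phi> 0"
    using L2 lin by simp
  have "(of_real a - z^2) * integral {0..} (hk w 0 z) - integral {0..} (hk w 2 z) / 4 = 0 - \<phi> 0"
    using LIMSEQ_unique[OF L1 L3] .
  then show ?thesis by (simp add: \<phi>_def field_simps)
qed

end



theorem lemma4p2:
  fixes a :: real and s :: real
  assumes "s = 1 \<or> s = -1"
  shows "\<exists>L :: complex \<Rightarrow> complex.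
     L holomorphic_on UNIV \<and>
     (\<forall>z. Re z > 0 \<longrightarrow>
        ((\<lambda>t. exp (- z * of_real t) * of_real (W a (s * t))) has_integral L z) {0..}) \<and>
     (\<forall>z. deriv (deriv L) z =
        4 * (of_real a - z\<^sup>2) * L z + of_real s * 4 * of_real (deriv (W a) 0)
        + 4 * z * of_real (W a 0))"
proof -
  have ss: "s * s = 1" using assms by auto
  obtain Wd where Wd: "\<And>x. (W a has_real_derivative Wd x) (at x) \<and>
       (Wd has_real_derivative ((a - x\<^sup>2 / 4) * W a x)) (at x)"
    using W_props[of a] unfolding weber_ode_def by blast
  have W0': "deriv (W a) 0 = Wd 0" using Wd[of 0] by (blast intro: DERIV_imp_deriv)
  define w where "w t = W a (s * t)" for t
  define w' where "w' t = s * Wd (s * t)" for t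
  have dmul: "((\<lambda>t. s * t) has_real_derivative s) (at t)" for t
    by (auto intro!: derivative_eq_intros)
  have dw: "(w has_real_derivative w' t) (at t)" for t
  proof -
    have "((\<lambda>t. W a (s * t)) has_real_derivative Wd (s * t) * s) (at t)"
      by (rule DERIV_chain2[OF _ dmul]) (use Wd in blast)
    then show ?thesis unfolding w_def[abs_def] w'_def by (simp add: mult.commute)
  qed
  have dw': "(w' has_real_derivative (a - t^2/4) * w t) (at t)" for t
  proof -
    have "((\<lambda>t. Wd (s * t)) has_real_derivative ((a - (s * t)\<^sup>2 / 4) * W a (s * t)) * s) (at t)"
      by (rule DERIV_chain2[OF _ dmul]) (use Wd in blast)
    then have "((\<lambda>t. s * Wd (s * t)) has_real_derivative s * (((a - (s * t)\<^sup>2 / 4) * W a (s * t)) * s)) (at t)"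
      by (rule DERIV_cmult)
    moreover have "s * (((a - (s * t)\<^sup>2 / 4) * W a (s * t)) * s) = (a - t^2/4) * w t"
    proof -
      have e: "(s * t)^2 = t^2" using ss by (simp add: power_mult_distrib power2_eq_square)
      have m: "s * (X * s) = (s * s) * X" for X by (simp add: ac_simps)
      show ?thesis unfolding w_def e m ss by simp
    qed
    ultimately show ?thesis unfolding w'_def[abs_def] by simp
  qed
  obtain C where C: "\<forall>t\<ge>0. \<bar>w t\<bar> \<le> C \<and> \<bar>w' t\<bar> \<le> C * (1 + t)"
    using weber_growth[OF dw dw'] by blast
  have Cb: "\<And>t. t \<ge> 0 \<Longrightarrow> \<bar>w t\<bar> \<le> C \<and> \<bar>w' t\<bar> \<le> C * (1 + t)" using C by blast
  define F where "F k z = integral {0..} (hk w k z)" for k z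
  define H where "H = {z. Re z > 0}"
  have oH: "open H" unfolding H_def by (rule open_halfspace_Re_gt)
  have cH: "connected H" unfolding H_def by (rule convex_connected[OF convex_halfspace_Re_gt])
  have dF0: "((F 0) has_field_derivative F 1 z) (at z)" if "z \<in> H" for z
    using Fk_deriv[OF dw dw' Cb, of z 0] that unfolding F_def[abs_def] H_def by simp
  have dF1: "((F 1) has_field_derivative F 2 z) (at z)" if "z \<in> H" for z
    using Fk_deriv[OF dw dw' Cb, of z 1] that unfolding F_def[abs_def] H_def by (simp add: numeral_2_eq_2)
  have odeF: "F 2 z = 4 * (of_real a - z^2) * F 0 z + 4 * (of_real (w' 0) + z * of_real (w 0))" if "z \<in> H" for z
    using Fk_ode[OF dw dw' Cb, of z] that unfolding F_def H_def by simp
  obtain f f1 f2 :: "complex \<Rightarrow> complex" where fH: "\<And>z. (f has_field_derivative f1 z) (at z) \<and> (f1 has_field_derivative f2 z) (at z) \<and>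
      f2 z = (of_real (4 * a - 4) + (-8) * z + (-4) * z^2) * f z + (4 * of_real (w' 0) + 4 * of_real (w 0)) + 4 * of_real (w 0) * z \<and>
      f 0 = F 0 1 \<and> f1 0 = F 1 1"
    using ode_entire_0[of "of_real (4 * a - 4)" "-8" "-4" "4 * of_real (w' 0) + 4 * of_real (w 0)" "4 * of_real (w 0)" "F 0 1" "F 1 1"]
    by blast
  define L where "L z = f (z - 1)" for z
  define L1 where "L1 z = f1 (z - 1)" for z
  define L2 where "L2 z = f2 (z - 1)" for z
  have dsub: "((\<lambda>z. z - 1) has_field_derivative 1) (at z)" for z :: complex
    by (auto intro!: derivative_eq_intros)
  have dL: "(L has_field_derivative L1 z) (at z)" for z
  proof -
    have "((\<lambda>z. f (z - 1)) has_field_derivative f1 (z - 1) * 1) (at z)"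
      by (rule DERIV_chain2[OF _ dsub]) (use fH in blast)
    then show ?thesis unfolding L_def[abs_def] L1_def by simp
  qed
  have dL1: "(L1 has_field_derivative L2 z) (at z)" for z
  proof -
    have "((\<lambda>z. f1 (z - 1)) has_field_derivative f2 (z - 1) * 1) (at z)"
      by (rule DERIV_chain2[OF _ dsub]) (use fH in blast)
    then show ?thesis unfolding L1_def[abs_def] L2_def by simp
  qed
  have odeL: "L2 z = 4 * (of_real a - z^2) * L z + 4 * (of_real (w' 0) + z * of_real (w 0))" for z
    using fH[of "z - 1"] unfolding L2_def L_def by (simp add: algebra_simps power2_eq_square)
  have holL: "L holomorphic_on UNIV"
    unfolding holomorphic_on_def field_differentiable_def using dL has_field_derivative_at_within by blast
  have derL: "deriv L = L1" using dL by (intro ext DERIV_imp_deriv)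
  have derL1: "deriv L1 = L2" using dL1 by (intro ext DERIV_imp_deriv)
  define D where "D z = L z - F 0 z" for z
  define D1 where "D1 z = L1 z - F 1 z" for z
  have dD: "(D has_field_derivative D1 z) (at z)" if "z \<in> H" for z
    unfolding D_def[abs_def] D1_def by (intro DERIV_diff dL dF0 that)
  have dD1: "(D1 has_field_derivative 4 * (of_real a - z^2) * D z) (at z)" if "z \<in> H" for z
  proof -
    have "(D1 has_field_derivative L2 z - F 2 z) (at z)"
      unfolding D1_def[abs_def] by (intro DERIV_diff dL1 dF1 that)
    moreover have "L2 z - F 2 z = 4 * (of_real a - z^2) * D z"
    proof -
      have "L2 z - F 2 z = (4 * (of_real a - z^2) * L z + 4 * (of_real (w' 0) + z * of_real (w 0)))
           - (4 * (of_real a - z^2) * F 0 z + 4 * (of_real (w' 0) + z * of_real (w 0)))"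
        by (simp only: odeL[of z] odeF[OF that])
      also have "\<dots> = 4 * (of_real a - z^2) * D z" unfolding D_def by (simp add: algebra_simps)
      finally show ?thesis .
    qed
    ultimately show ?thesis by simp
  qed
  have oneH: "1 \<in> H" unfolding H_def by simp
  have D0: "D 1 = 0" using fH[of 0] unfolding D_def L_def by simp
  have D10: "D1 1 = 0" using fH[of 0] unfolding D1_def L1_def by simp
  have claim: "\<exists>\<alpha> \<beta>. \<alpha> holomorphic_on UNIV \<and> \<beta> holomorphic_on UNIV \<and>
                 (\<forall>z\<in>H. (deriv ^^ n) D z = \<alpha> z * D z + \<beta> z * D1 z)" for n
  proof (induction n)
    case 0
    show ?case by (rule exI[of _ "\<lambda>_. 1"], rule exI[of _ "\<lambda>_. 0"]) auto
  next
    case (Suc n)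
    then obtain \<alpha> \<beta> where ab: "\<alpha> holomorphic_on UNIV" "\<beta> holomorphic_on UNIV"
      and eq: "\<And>z. z \<in> H \<Longrightarrow> (deriv ^^ n) D z = \<alpha> z * D z + \<beta> z * D1 z" by blast
    define \<alpha>' where "\<alpha>' z = deriv \<alpha> z + \<beta> z * (4 * (of_real a - z^2))" for z
    define \<beta>' where "\<beta>' z = \<alpha> z + deriv \<beta> z" for z
    have "\<alpha>' holomorphic_on UNIV" unfolding \<alpha>'_def[abs_def]
      by (intro holomorphic_intros holomorphic_deriv ab) auto
    moreover have "\<beta>' holomorphic_on UNIV" unfolding \<beta>'_def[abs_def]
      by (intro holomorphic_intros holomorphic_deriv ab) auto
    moreover have "(deriv ^^ Suc n) D z = \<alpha>' z * D z + \<beta>' z * D1 z" if z: "z \<in> H" for z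
    proof -
      have ev: "\<forall>\<^sub>F y in nhds z. (deriv ^^ n) D y = \<alpha> y * D y + \<beta> y * D1 y"
        using eventually_nhds_in_open[OF oH z] by (rule eventually_mono) (rule eq)
      have "(deriv ^^ Suc n) D z = deriv (\<lambda>y. \<alpha> y * D y + \<beta> y * D1 y) z"
        using deriv_cong_ev[OF ev refl] by simp
      also have "\<dots> = \<alpha>' z * D z + \<beta>' z * D1 z"
      proof (rule DERIV_imp_deriv)
        have da: "(\<alpha> has_field_derivative deriv \<alpha> z) (at z)" by (rule holomorphic_derivI[OF ab(1)]) auto
        have db: "(\<beta> has_field_derivative deriv \<beta> z) (at z)" by (rule holomorphic_derivI[OF ab(2)]) auto
        have "((\<lambda>y. \<alpha> y * D y + \<beta> y * D1 y) has_field_derivative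
               (deriv \<alpha> z * D z + D1 z * \<alpha> z) + (deriv \<beta> z * D1 z + (4 * (of_real a - z^2) * D z) * \<beta> z)) (at z)"
          by (intro DERIV_add DERIV_mult da db dD dD1 z)
        moreover have "(deriv \<alpha> z * D z + D1 z * \<alpha> z) + (deriv \<beta> z * D1 z + (4 * (of_real a - z^2) * D z) * \<beta> z)
             = \<alpha>' z * D z + \<beta>' z * D1 z"
          unfolding \<alpha>'_def \<beta>'_def by (simp add: algebra_simps)
        ultimately show "((\<lambda>y. \<alpha> y * D y + \<beta> y * D1 y) has_field_derivative \<alpha>' z * D z + \<beta>' z * D1 z) (at z)"
          by simp
      qed
      finally show ?thesis .
    qed
    ultimately show ?case by blast
  qed
  have allder: "(deriv ^^ n) D 1 = 0" for n
    using claim[of n] oneH D0 D10 by auto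
  have holD: "D holomorphic_on H"
    unfolding holomorphic_on_def field_differentiable_def using dD has_field_derivative_at_within by blast
  have LF: "L z = F 0 z" if "z \<in> H" for z
    using holomorphic_fun_eq_0_on_connected[OF holD oH cH allder oneH that] unfolding D_def by simp
  show ?thesis
  proof (intro exI conjI allI impI)
    show "L holomorphic_on UNIV" by (rule holL)
    fix z :: complex
    assume z: "Re z > 0"
    then have zH: "z \<in> H" unfolding H_def by simp
    have "hk w 0 z integrable_on {0..}" using hk_tail(1)[OF dw dw' Cb z order_refl, of 0] by simp
    then have "(hk w 0 z has_integral F 0 z) {0..}" unfolding F_def by (rule integrable_integral)
    moreover have "hk w 0 z = (\<lambda>t. exp (- z * of_real t) * of_real (W a (s * t)))"
      by (rule ext) (simp add: hk_def w_def)
    ultimately show "((\<lambda>t. exp (- z * of_real t) * of_real (W a (s * t))) has_integral L z) {0..}"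
      using LF[OF zH] by simp
  next
    fix z :: complex
    show "deriv (deriv L) z = 4 * (of_real a - z\<^sup>2) * L z + of_real s * 4 * of_real (deriv (W a) 0)
        + 4 * z * of_real (W a 0)"
      unfolding derL derL1 odeL W0' by (simp add: w_def w'_def algebra_simps)
  qed
qed


end
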